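(* Let $\mathbf{B}=\{z\in\mathbb{D}^\infty:z_j\to0\}$ be the open unit ball of $c_0$ and let $\phi=(\phi_j)_{j\ge1}:\mathbf{B}\to\mathbf{B}$ be an analytic map such that $C_\phi f=f\circ\phi$ maps $A^+(\mathbb{T}^\infty)$ into itself. If $C_\phi$ is an isometric automorphism of $A^+(\mathbb{T}^\infty)$, then $\phi(z)=(\epsilon_jz_{\sigma(j)})_{j\ge1}$ for some permutation $\sigma$ of $\mathbb{N}$ and some sequence $(\epsilon_j)_{j\ge1}$ of complex numbers of modulus $1$.
   Context: $A^+(\mathbb{T}^\infty)$ is the algebra of functions $f(z)=\sum_\alpha a_\alpha z^\alpha$ on $\overline{\mathbb{D}}^\infty$, $\alpha$ ranging over finitely supported sequences of non-negative integers, with $\|f\|=\sum|a_\alpha|<\infty$; a Banach algebra under pointwise multiplication. Analyticity on $\mathbf{B}$ is in the sense of holomorphic maps on the Banach space $c_0$. An automorphism is a bijective algebra homomorphism onto $A^+(\mathbb{T}^\infty)$. *)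

theory Defs
  imports "HOL-Analysis.Analysis"
begin

text \<open>Sequences are indexed by nat starting at 0 (the paper indexes from 1).\<close>

definition fin_multi :: "(nat \<Rightarrow> nat) \<Rightarrow> bool" where
  "fin_multi \<alpha> \<longleftrightarrow> finite {j. \<alpha> j \<noteq> 0}"

definition monom :: "(nat \<Rightarrow> nat) \<Rightarrow> (nat \<Rightarrow> complex) \<Rightarrow> complex" where
  "monom \<alpha> z = (\<Prod>j\<in>{j. \<alpha> j \<noteq> 0}. z j ^ \<alpha> j)"

definition Aplus_coeff :: "((nat \<Rightarrow> nat) \<Rightarrow> complex) \<Rightarrow> bool" where
  "Aplus_coeff a \<longleftrightarrow> (\<forall>\<alpha>. \<not> fin_multi \<alpha> \<longrightarrow> a \<alpha> = 0) \<and> (\<lambda>\<alpha>. cmod (a \<alpha>)) summable_on UNIV"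

definition Aplus_eval :: "((nat \<Rightarrow> nat) \<Rightarrow> complex) \<Rightarrow> (nat \<Rightarrow> complex) \<Rightarrow> complex" where
  "Aplus_eval a z = infsum (\<lambda>\<alpha>. a \<alpha> * monom \<alpha> z) UNIV"

definition c0 :: "(nat \<Rightarrow> complex) set" where
  "c0 = {z. z \<longlonglongrightarrow> 0}"

definition c0_norm :: "(nat \<Rightarrow> complex) \<Rightarrow> real" where
  "c0_norm z = (SUP j. cmod (z j))"

definition c0_ball :: "(nat \<Rightarrow> complex) set" where
  "c0_ball = {z. (\<forall>j. cmod (z j) < 1) \<and> z \<longlonglongrightarrow> 0}"

text \<open>Holomorphy on B in the sense of complex Frechet differentiability in the
  Banach space c_0 (with values in c_0).\<close>
definition c0_holomorphic_on :: "((nat \<Rightarrow> complex) \<Rightarrow> (nat \<Rightarrow> complex)) \<Rightarrow> (nat \<Rightarrow> complex) set \<Rightarrow> bool" where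
  "c0_holomorphic_on \<phi> U \<longleftrightarrow>
     (\<forall>z\<in>U. \<exists>L :: (nat \<Rightarrow> complex) \<Rightarrow> (nat \<Rightarrow> complex).
        (\<forall>x\<in>c0. \<forall>y\<in>c0. L (\<lambda>j. x j + y j) = (\<lambda>j. L x j + L y j)) \<and>
        (\<forall>x\<in>c0. \<forall>c::complex. L (\<lambda>j. c * x j) = (\<lambda>j. c * L x j)) \<and>
        (\<forall>x\<in>c0. L x \<in> c0) \<and>
        (\<exists>K. \<forall>x\<in>c0. c0_norm (L x) \<le> K * c0_norm x) \<and>
        (\<forall>\<epsilon>>0. \<exists>\<delta>>0. \<forall>h\<in>c0. c0_norm h < \<delta> \<longrightarrow>
            c0_norm ((\<lambda>j. \<phi> (\<lambda>i. z i + h i) j - \<phi> z j - L h j)) \<le> \<epsilon> * c0_norm h))"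

text \<open>Elements of A^+(T^infinity), regarded as functions on B (they are determined by
  their values there), and the norm (sum of absolute values of the coefficients).\<close>
definition Aplus :: "((nat \<Rightarrow> complex) \<Rightarrow> complex) set" where
  "Aplus = {restrict (Aplus_eval a) c0_ball | a. Aplus_coeff a}"

definition Aplus_norm :: "((nat \<Rightarrow> complex) \<Rightarrow> complex) \<Rightarrow> real" where
  "Aplus_norm f = (THE s. \<exists>a. Aplus_coeff a \<and> f = restrict (Aplus_eval a) c0_ball
                          \<and> s = infsum (\<lambda>\<alpha>. cmod (a \<alpha>)) UNIV)"

definition comp_op :: "((nat \<Rightarrow> complex) \<Rightarrow> (nat \<Rightarrow> complex)) \<Rightarrow> ((nat \<Rightarrow> complex) \<Rightarrow> complex) \<Rightarrow> ((nat \<Rightarrow> complex) \<Rightarrow> complex)" where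
  "comp_op \<phi> f = restrict (\<lambda>z. f (\<phi> z)) c0_ball"

end

theory Submission
  imports Defs
begin


lemma monom_le1:
  assumes "\<forall>j. cmod (z j) \<le> 1"
  shows "cmod (monom \<alpha> z) \<le> 1"
proof -
  have "cmod (monom \<alpha> z) = (\<Prod>j\<in>{j. \<alpha> j \<noteq> 0}. cmod (z j) ^ \<alpha> j)"
    by (simp add: monom_def prod_norm[symmetric] norm_power)
  also have "\<dots> \<le> 1"
    by (rule prod_le_1) (use assms in \<open>auto intro: power_le_one\<close>)
  finally show ?thesis .
qed

lemma monom_le_coord:
  assumes "fin_multi \<alpha>" "\<alpha> j \<noteq> 0" "\<forall>k. cmod (z k) \<le> 1"
  shows "cmod (monom \<alpha> z) \<le> cmod (z j)"
proof -
  let ?S = "{j. \<alpha> j \<noteq> 0}"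
  have fin: "finite ?S" using assms(1) by (simp add: fin_multi_def)
  have "cmod (monom \<alpha> z) = (\<Prod>j\<in>?S. cmod (z j) ^ \<alpha> j)"
    by (simp add: monom_def prod_norm[symmetric] norm_power)
  also have "\<dots> = cmod (z j) ^ \<alpha> j * (\<Prod>k\<in>?S - {j}. cmod (z k) ^ \<alpha> k)"
    using fin assms(2) by (subst prod.remove[of _ j]) auto
  also have "\<dots> \<le> cmod (z j) ^ \<alpha> j * 1"
    by (rule mult_left_mono, rule prod_le_1) (use assms in \<open>auto intro: power_le_one\<close>)
  also have "\<dots> \<le> cmod (z j) ^ 1"
    unfolding mult_1_right by (rule power_decreasing) (use assms in auto)
  finally show ?thesis by simp
qed

lemma Aplus_abs_summable:
  assumes "Aplus_coeff a" "\<forall>j. cmod (z j) \<le> 1"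
  shows "(\<lambda>\<alpha>. norm (a \<alpha> * monom \<alpha> z)) summable_on UNIV"
proof (rule Infinite_Sum.abs_summable_on_comparison_test)
  show "(\<lambda>\<alpha>. norm (a \<alpha>)) summable_on UNIV" using assms(1) by (simp add: Aplus_coeff_def)
  fix \<alpha> show "norm (a \<alpha> * monom \<alpha> z) \<le> norm (a \<alpha>)"
    using monom_le1[OF assms(2), of \<alpha>]
    by (simp add: norm_mult mult_left_le)
qed

lemma Aplus_summable:
  assumes "Aplus_coeff a" "\<forall>j. cmod (z j) \<le> 1"
  shows "(\<lambda>\<alpha>. a \<alpha> * monom \<alpha> z) summable_on UNIV"
  by (rule abs_summable_summable[OF Aplus_abs_summable[OF assms]])

lemma Aplus_cmod_summable:
  assumes "Aplus_coeff a"
  shows "(\<lambda>\<alpha>. cmod (a \<alpha>)) summable_on UNIV"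
  using assms by (simp add: Aplus_coeff_def)

lemma eval_bound:
  assumes "Aplus_coeff a" "\<forall>j. cmod (z j) \<le> 1"
    and "\<And>\<alpha>. a \<alpha> \<noteq> 0 \<Longrightarrow> cmod (monom \<alpha> z) \<le> r" and "0 \<le> r"
  shows "cmod (Aplus_eval a z) \<le> r * infsum (\<lambda>\<alpha>. cmod (a \<alpha>)) UNIV"
proof -
  have "cmod (Aplus_eval a z) \<le> infsum (\<lambda>\<alpha>. norm (a \<alpha> * monom \<alpha> z)) UNIV"
    unfolding Aplus_eval_def by (rule norm_infsum_bound[OF Aplus_abs_summable[OF assms(1,2)]])
  also have "\<dots> \<le> infsum (\<lambda>\<alpha>. r * cmod (a \<alpha>)) UNIV"
  proof (rule infsum_mono)
    show "(\<lambda>\<alpha>. norm (a \<alpha> * monom \<alpha> z)) summable_on UNIV"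
      by (rule Aplus_abs_summable[OF assms(1,2)])
    show "(\<lambda>\<alpha>. r * cmod (a \<alpha>)) summable_on UNIV"
      by (rule summable_on_cmult_right[OF Aplus_cmod_summable[OF assms(1)]])
    fix \<alpha> show "norm (a \<alpha> * monom \<alpha> z) \<le> r * cmod (a \<alpha>)"
    proof (cases "a \<alpha> = 0")
      case False
      then show ?thesis using assms(3)[OF False]
        by (simp add: norm_mult mult.commute mult_left_mono)
    qed simp
  qed
  also have "\<dots> = r * infsum (\<lambda>\<alpha>. cmod (a \<alpha>)) UNIV"
    by (rule infsum_cmult_right) (rule Aplus_cmod_summable[OF assms(1)])
  finally show ?thesis .
qed

lemma coeff_lin:
  assumes "Aplus_coeff a" "Aplus_coeff b"
  shows "Aplus_coeff (\<lambda>\<alpha>. a \<alpha> + c * b \<alpha>)"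
  unfolding Aplus_coeff_def
proof
  show "\<forall>\<alpha>. \<not> fin_multi \<alpha> \<longrightarrow> a \<alpha> + c * b \<alpha> = 0"
    using assms by (simp add: Aplus_coeff_def)
  show "(\<lambda>\<alpha>. cmod (a \<alpha> + c * b \<alpha>)) summable_on UNIV"
  proof (rule summable_on_comparison_test)
    show "(\<lambda>\<alpha>. cmod (a \<alpha>) + cmod c * cmod (b \<alpha>)) summable_on UNIV"
      by (intro summable_on_add summable_on_cmult_right Aplus_cmod_summable assms)
    fix \<alpha> show "cmod (a \<alpha> + c * b \<alpha>) \<le> cmod (a \<alpha>) + cmod c * cmod (b \<alpha>)"
      by (metis norm_mult norm_triangle_ineq)
  qed simp
qed

lemma eval_lin:
  assumes "Aplus_coeff a" "Aplus_coeff b" "\<forall>j. cmod (z j) \<le> 1"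
  shows "Aplus_eval (\<lambda>\<alpha>. a \<alpha> + c * b \<alpha>) z = Aplus_eval a z + c * Aplus_eval b z"
proof -
  have "Aplus_eval (\<lambda>\<alpha>. a \<alpha> + c * b \<alpha>) z
      = infsum (\<lambda>\<alpha>. a \<alpha> * monom \<alpha> z + c * (b \<alpha> * monom \<alpha> z)) UNIV"
    unfolding Aplus_eval_def by (simp add: algebra_simps)
  also have "\<dots> = Aplus_eval a z + infsum (\<lambda>\<alpha>. c * (b \<alpha> * monom \<alpha> z)) UNIV"
    unfolding Aplus_eval_def
    by (intro infsum_add summable_on_cmult_right Aplus_summable assms)
  also have "infsum (\<lambda>\<alpha>. c * (b \<alpha> * monom \<alpha> z)) UNIV = c * Aplus_eval b z"
    unfolding Aplus_eval_def
    by (intro infsum_cmult_right Aplus_summable assms)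
  finally show ?thesis .
qed

definition delta :: "(nat \<Rightarrow> nat) \<Rightarrow> complex \<Rightarrow> (nat \<Rightarrow> nat) \<Rightarrow> complex" where
  "delta \<gamma> c = (\<lambda>\<alpha>. if \<alpha> = \<gamma> then c else 0)"

lemma infsum_single_pt:
  fixes f :: "'a \<Rightarrow> 'b::{comm_monoid_add,t2_space}"
  assumes "\<And>x. x \<noteq> y \<Longrightarrow> f x = 0"
  shows "infsum f UNIV = f y"
proof -
  have "infsum f UNIV = infsum f {y}"
    by (rule infsum_cong_neutral) (use assms in auto)
  then show ?thesis by simp
qed

lemma delta_coeff: "fin_multi \<gamma> \<Longrightarrow> Aplus_coeff (delta \<gamma> c)"
  unfolding Aplus_coeff_def delta_def
  by (auto intro!: finite_nonzero_values_imp_summable_on)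

lemma delta_eval: "Aplus_eval (delta \<gamma> c) z = c * monom \<gamma> z"
proof -
  have "Aplus_eval (delta \<gamma> c) z = infsum (\<lambda>\<alpha>. delta \<gamma> c \<alpha> * monom \<alpha> z) {\<gamma>}"
    unfolding Aplus_eval_def by (rule infsum_cong_neutral) (auto simp: delta_def)
  then show ?thesis by (simp add: delta_def)
qed

lemma delta_sum: "infsum (\<lambda>\<alpha>. cmod (delta \<gamma> c \<alpha>)) UNIV = cmod c"
proof -
  have "infsum (\<lambda>\<alpha>. cmod (delta \<gamma> c \<alpha>)) UNIV = infsum (\<lambda>\<alpha>. cmod (delta \<gamma> c \<alpha>)) {\<gamma>}"
    by (rule infsum_cong_neutral) (auto simp: delta_def)
  then show ?thesis by (simp add: delta_def)
qed




definition Rn :: "nat \<Rightarrow> (nat \<Rightarrow> complex) set" where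
  "Rn n = {z. (\<forall>j. cmod (z j) < 1) \<and> (\<forall>j\<ge>n. z j = 0)}"

definition supp_in :: "nat \<Rightarrow> ((nat \<Rightarrow> nat) \<Rightarrow> complex) \<Rightarrow> bool" where
  "supp_in n a \<longleftrightarrow> (\<forall>\<alpha>. a \<alpha> \<noteq> 0 \<longrightarrow> (\<forall>j\<ge>n. \<alpha> j = 0))"

lemma Rn_le1: "z \<in> Rn n \<Longrightarrow> \<forall>j. cmod (z j) \<le> 1"
  by (auto simp: Rn_def less_imp_le)

lemma Rn_ball: "z \<in> Rn n \<Longrightarrow> z \<in> c0_ball"
proof -
  assume z: "z \<in> Rn n"
  have "eventually (\<lambda>j. z j = 0) sequentially"
    using z by (auto simp: Rn_def eventually_sequentially)
  then have "z \<longlonglongrightarrow> 0" by (rule tendsto_eventually)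
  then show ?thesis using z by (simp add: Rn_def c0_ball_def)
qed

lemma coeff_restrict: "Aplus_coeff a \<Longrightarrow> Aplus_coeff (\<lambda>\<alpha>. if P \<alpha> then a \<alpha> else 0)"
  unfolding Aplus_coeff_def
  by (auto intro: summable_on_comparison_test[where f="\<lambda>\<alpha>. cmod (a \<alpha>)"])

lemma monom_zero_multi: "monom (\<lambda>_. 0) z = 1"
  by (simp add: monom_def)

lemma monom_split:
  assumes "fin_multi \<beta>"
  shows "monom \<beta> z = z n ^ \<beta> n * (\<Prod>j\<in>{j. \<beta> j \<noteq> 0} - {n}. z j ^ \<beta> j)"
proof (cases "\<beta> n = 0")
  case True
  then have "{j. \<beta> j \<noteq> 0} - {n} = {j. \<beta> j \<noteq> 0}" by auto
  then show ?thesis using True by (simp add: monom_def)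
next
  case False
  have fin: "finite {j. \<beta> j \<noteq> 0}" using assms by (simp add: fin_multi_def)
  show ?thesis unfolding monom_def using False fin by (subst prod.remove[of _ n]) auto
qed

lemma fin_multi_upd: "fin_multi (\<beta>(n := k)) \<longleftrightarrow> fin_multi \<beta>"
proof -
  have "{j. (\<beta>(n := k)) j \<noteq> 0} - {n} = {j. \<beta> j \<noteq> 0} - {n}" by auto
  then show ?thesis unfolding fin_multi_def
    by (metis finite_Diff2 finite.emptyI finite_insert)
qed

lemma monom_shift:
  assumes "fin_multi \<beta>"
  shows "monom (\<beta>(n := Suc (\<beta> n))) z = z n * monom \<beta> z"
proof -
  have f2: "fin_multi (\<beta>(n := Suc (\<beta> n)))" using assms fin_multi_upd by blast
  have e: "{j. (\<beta>(n := Suc (\<beta> n))) j \<noteq> 0} - {n} = {j. \<beta> j \<noteq> 0} - {n}" by auto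
  have "monom (\<beta>(n := Suc (\<beta> n))) z = z n ^ Suc (\<beta> n) * (\<Prod>j\<in>{j. \<beta> j \<noteq> 0} - {n}. z j ^ \<beta> j)"
    by (subst monom_split[OF f2, of _ n], subst e) (auto intro!: prod.cong)
  also have "\<dots> = z n * monom \<beta> z"
    by (subst monom_split[OF assms, of _ n]) simp
  finally show ?thesis .
qed

lemma monom_upd_irrel:
  assumes "\<beta> n = 0"
  shows "monom \<beta> (z(n := r)) = monom \<beta> z"
  unfolding monom_def using assms by (intro prod.cong) auto

lemma small_imp_zero:
  fixes x A :: real
  assumes "\<And>r. 0 < r \<Longrightarrow> r < 1 \<Longrightarrow> x \<le> r * A" "0 \<le> A"
  shows "x \<le> 0"
proof (rule ccontr)
  assume "\<not> x \<le> 0"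
  then have x: "x > 0" by simp
  define r where "r = min (1/2) (x / (2 * (A + 1)))"
  have r: "0 < r" "r < 1" using x assms(2) by (auto simp: r_def)
  have "r * A \<le> (x / (2 * (A + 1))) * A"
    using assms(2) by (intro mult_right_mono) (auto simp: r_def)
  also have "\<dots> < x"
  proof -
    have "0 \<le> A * x" using x assms(2) by simp
    then show ?thesis using x assms(2) by (simp add: field_simps) (smt (verit) mult_nonneg_nonneg)
  qed
  finally show False using assms(1)[OF r] by simp
qed

lemma eval_cong:
  assumes "\<And>\<alpha>. a \<alpha> * monom \<alpha> z = b \<alpha> * monom \<alpha> w"
  shows "Aplus_eval a z = Aplus_eval b w"
  unfolding Aplus_eval_def using assms by simp

lemma uniq_base:
  assumes "Aplus_coeff a" "supp_in 0 a" "\<forall>z\<in>Rn 0. Aplus_eval a z = 0"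
  shows "a \<alpha> = 0"
proof -
  have z0: "(\<lambda>_. 0) \<in> Rn 0" by (simp add: Rn_def)
  have s: "\<And>\<beta>. a \<beta> \<noteq> 0 \<Longrightarrow> \<beta> = (\<lambda>_. 0)" using assms(2) by (auto simp: supp_in_def)
  have "Aplus_eval a (\<lambda>_. 0) = infsum (\<lambda>\<beta>. a \<beta> * monom \<beta> (\<lambda>_. 0)) {\<lambda>_. 0}"
    unfolding Aplus_eval_def by (rule infsum_cong_neutral) (use s in auto)
  then have "a (\<lambda>_. 0) = 0" using assms(3) z0 by (simp add: monom_zero_multi)
  then show ?thesis using s by metis
qed

context
  fixes n :: nat
  assumes IH: "\<And>a \<alpha>. Aplus_coeff a \<Longrightarrow> supp_in n a \<Longrightarrow> \<forall>z\<in>Rn n. Aplus_eval a z = 0 \<Longrightarrow> a \<alpha> = 0"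
begin

definition Qp where
  "Qp a \<longleftrightarrow> Aplus_coeff a \<and> supp_in (Suc n) a \<and> (\<forall>z\<in>Rn (Suc n). z n \<noteq> 0 \<longrightarrow> Aplus_eval a z = 0)"

lemma Qp_zero:
  assumes "Qp a" "\<alpha> n = 0"
  shows "a \<alpha> = 0"
proof -
  have ca: "Aplus_coeff a" and sa: "supp_in (Suc n) a"
    and za: "\<forall>z\<in>Rn (Suc n). z n \<noteq> 0 \<longrightarrow> Aplus_eval a z = 0"
    using assms(1) by (auto simp: Qp_def)
  define a0 where "a0 = (\<lambda>\<alpha>. if \<alpha> n = 0 then a \<alpha> else 0)"
  define ap where "ap = (\<lambda>\<alpha>. if \<alpha> n \<noteq> 0 then a \<alpha> else 0)"
  have c0: "Aplus_coeff a0" unfolding a0_def by (rule coeff_restrict[OF ca])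
  have cp: "Aplus_coeff ap" unfolding ap_def by (rule coeff_restrict[OF ca])
  have s0: "supp_in n a0" using sa unfolding a0_def supp_in_def
    by (auto, metis Suc_leI le_neq_implies_less)
  have "\<forall>z\<in>Rn n. Aplus_eval a0 z = 0"
  proof
    fix z assume z: "z \<in> Rn n"
    let ?A = "infsum (\<lambda>\<alpha>. cmod (ap \<alpha>)) UNIV"
    have A0: "0 \<le> ?A" by (rule infsum_nonneg) simp
    have "cmod (Aplus_eval a0 z) \<le> 0"
    proof (rule small_imp_zero[OF _ A0])
      fix r :: real assume r: "0 < r" "r < 1"
      define z' where "z' = z(n := complex_of_real r)"
      have z': "z' \<in> Rn (Suc n)" "z' n \<noteq> 0"
        using z r by (auto simp: z'_def Rn_def le_Suc_eq)
      have le1: "\<forall>j. cmod (z' j) \<le> 1" by (rule Rn_le1[OF z'(1)])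
      have "Aplus_eval a z' = Aplus_eval (\<lambda>\<alpha>. a0 \<alpha> + 1 * ap \<alpha>) z'"
        by (rule eval_cong) (simp add: a0_def ap_def)
      also have "\<dots> = Aplus_eval a0 z' + 1 * Aplus_eval ap z'"
        by (rule eval_lin[OF c0 cp le1])
      finally have "Aplus_eval a0 z' + Aplus_eval ap z' = 0" using za z' by simp
      then have e1: "Aplus_eval a0 z' = - Aplus_eval ap z'" by (simp add: eq_neg_iff_add_eq_0)
      have e2: "Aplus_eval a0 z' = Aplus_eval a0 z"
        by (rule eval_cong) (simp add: a0_def z'_def monom_upd_irrel)
      have "cmod (Aplus_eval ap z') \<le> r * ?A"
      proof (rule eval_bound[OF cp le1])
        fix \<alpha> assume "ap \<alpha> \<noteq> 0"
        then have "\<alpha> n \<noteq> 0" "fin_multi \<alpha>" using ca by (auto simp: ap_def Aplus_coeff_def split: if_splits)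
        then have "cmod (monom \<alpha> z') \<le> cmod (z' n)" using monom_le_coord le1 by blast
        then show "cmod (monom \<alpha> z') \<le> r" using r by (simp add: z'_def)
      qed (use r in simp)
      then show "cmod (Aplus_eval a0 z) \<le> r * ?A" using e1 e2 by simp
    qed
    then show "Aplus_eval a0 z = 0" by simp
  qed
  then have "a0 \<alpha> = 0" using IH[OF c0 s0] by blast
  then show ?thesis using assms(2) by (simp add: a0_def)
qed

definition shiftc :: "((nat \<Rightarrow> nat) \<Rightarrow> complex) \<Rightarrow> (nat \<Rightarrow> nat) \<Rightarrow> complex" where
  "shiftc a = (\<lambda>\<beta>. a (\<beta>(n := Suc (\<beta> n))))"

lemma Qp_shift:
  assumes "Qp a"
  shows "Qp (shiftc a)"
proof -
  have ca: "Aplus_coeff a" and sa: "supp_in (Suc n) a"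
    and za: "\<forall>z\<in>Rn (Suc n). z n \<noteq> 0 \<longrightarrow> Aplus_eval a z = 0"
    using assms(1) by (auto simp: Qp_def)
  define g where "g = (\<lambda>\<beta>::nat\<Rightarrow>nat. \<beta>(n := Suc (\<beta> n)))"
  have inj: "inj g" unfolding g_def inj_def
    by (metis fun_upd_idem_iff fun_upd_upd nat.inject)
  have cs: "Aplus_coeff (shiftc a)"
    unfolding Aplus_coeff_def
  proof
    show "\<forall>\<alpha>. \<not> fin_multi \<alpha> \<longrightarrow> shiftc a \<alpha> = 0"
      using ca fin_multi_upd by (auto simp: Aplus_coeff_def shiftc_def)
    have "(\<lambda>\<alpha>. cmod (a \<alpha>)) summable_on (g ` UNIV)"
      using Aplus_cmod_summable[OF ca] by (rule summable_on_subset_banach) simp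
    then have "((\<lambda>\<alpha>. cmod (a \<alpha>)) \<circ> g) summable_on UNIV"
      using summable_on_reindex[OF inj_on_subset[OF inj subset_UNIV]] by blast
    then show "(\<lambda>\<alpha>. cmod (shiftc a \<alpha>)) summable_on UNIV"
      by (simp add: shiftc_def g_def o_def)
  qed
  have ss: "supp_in (Suc n) (shiftc a)"
    using sa unfolding supp_in_def shiftc_def
    by (metis Suc_n_not_le_n fun_upd_other)
  have zs: "\<forall>z\<in>Rn (Suc n). z n \<noteq> 0 \<longrightarrow> Aplus_eval (shiftc a) z = 0"
  proof (intro ballI impI)
    fix z assume z: "z \<in> Rn (Suc n)" "z n \<noteq> 0"
    have zero: "\<And>\<alpha>. \<alpha> n = 0 \<Longrightarrow> a \<alpha> = 0" using Qp_zero[OF assms] by blast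
    have img: "g ` UNIV = {\<alpha>. \<alpha> n \<noteq> 0}"
    proof
      show "g ` UNIV \<subseteq> {\<alpha>. \<alpha> n \<noteq> 0}" by (auto simp: g_def)
      show "{\<alpha>. \<alpha> n \<noteq> 0} \<subseteq> g ` UNIV"
      proof
        fix \<alpha> :: "nat \<Rightarrow> nat" assume "\<alpha> \<in> {\<alpha>. \<alpha> n \<noteq> 0}"
        then have "\<alpha> = g (\<alpha>(n := \<alpha> n - 1))" by (auto simp: g_def)
        then show "\<alpha> \<in> g ` UNIV" by blast
      qed
    qed
    have "Aplus_eval a z = infsum (\<lambda>\<alpha>. a \<alpha> * monom \<alpha> z) (g ` UNIV)"
      unfolding Aplus_eval_def img by (rule infsum_cong_neutral) (use zero in auto)
    also have "\<dots> = infsum ((\<lambda>\<alpha>. a \<alpha> * monom \<alpha> z) \<circ> g) UNIV"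
      by (rule infsum_reindex) (use inj in simp)
    also have "\<dots> = infsum (\<lambda>\<beta>. z n * (shiftc a \<beta> * monom \<beta> z)) UNIV"
    proof (rule infsum_cong)
      fix \<beta> :: "nat \<Rightarrow> nat"
      show "((\<lambda>\<alpha>. a \<alpha> * monom \<alpha> z) \<circ> g) \<beta> = z n * (shiftc a \<beta> * monom \<beta> z)"
      proof (cases "a (g \<beta>) = 0")
        case False
        then have "fin_multi (g \<beta>)" using ca by (auto simp: Aplus_coeff_def)
        then have "fin_multi \<beta>" using fin_multi_upd by (simp add: g_def)
        then show ?thesis using monom_shift by (simp add: g_def shiftc_def)
      qed (simp add: shiftc_def g_def)
    qed
    also have "\<dots> = z n * Aplus_eval (shiftc a) z"
      unfolding Aplus_eval_def
      by (rule infsum_cmult_right, rule Aplus_summable[OF cs Rn_le1[OF z(1)]])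
    finally show "Aplus_eval (shiftc a) z = 0" using za z by simp
  qed
  show ?thesis using cs ss zs by (simp add: Qp_def)
qed

lemma Qp_iter: "Qp a \<Longrightarrow> Qp (\<lambda>\<beta>. a (\<beta>(n := \<beta> n + k)))"
proof (induction k)
  case 0 then show ?case by simp
next
  case (Suc k)
  have "Qp (shiftc (\<lambda>\<beta>. a (\<beta>(n := \<beta> n + k))))" by (rule Qp_shift[OF Suc.IH[OF Suc.prems]])
  moreover have "shiftc (\<lambda>\<beta>. a (\<beta>(n := \<beta> n + k))) = (\<lambda>\<beta>. a (\<beta>(n := \<beta> n + Suc k)))"
    by (simp add: shiftc_def)
  ultimately show ?case by metis
qed

lemma uniq_step:
  assumes "Aplus_coeff a" "supp_in (Suc n) a" "\<forall>z\<in>Rn (Suc n). Aplus_eval a z = 0"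
  shows "a \<alpha> = 0"
proof -
  have q: "Qp a" using assms by (simp add: Qp_def)
  have "Qp (\<lambda>\<beta>. a (\<beta>(n := \<beta> n + \<alpha> n)))" by (rule Qp_iter[OF q])
  from Qp_zero[OF this, of "\<alpha>(n := 0)"] show ?thesis by simp
qed

end

lemma uniq_n: "Aplus_coeff a \<Longrightarrow> supp_in n a \<Longrightarrow> \<forall>z\<in>Rn n. Aplus_eval a z = 0 \<Longrightarrow> a \<alpha> = 0"
proof (induction n arbitrary: a \<alpha>)
  case 0 then show ?case using uniq_base by blast
next
  case (Suc n)
  show ?case
    apply (rule uniq_step[where n=n and a=a and \<alpha>=\<alpha>])
    apply (rule Suc.IH; assumption)
    using Suc.prems by auto
qed

lemma uniq:
  assumes "Aplus_coeff a" "\<forall>z\<in>c0_ball. Aplus_eval a z = 0"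
  shows "a \<alpha> = 0"
proof (cases "fin_multi \<alpha>")
  case False then show ?thesis using assms(1) by (simp add: Aplus_coeff_def)
next
  case True
  then obtain n where n: "{j. \<alpha> j \<noteq> 0} \<subseteq> {..<n}"
    using finite_nat_bounded by (auto simp: fin_multi_def)
  define b where "b = (\<lambda>\<beta>. if (\<forall>j\<ge>n. \<beta> j = 0) then a \<beta> else 0)"
  have cb: "Aplus_coeff b" unfolding b_def by (rule coeff_restrict[OF assms(1)])
  have sb: "supp_in n b" by (auto simp: supp_in_def b_def)
  have "\<forall>z\<in>Rn n. Aplus_eval b z = 0"
  proof
    fix z assume z: "z \<in> Rn n"
    have "Aplus_eval b z = Aplus_eval a z"
    proof (rule eval_cong)
      fix \<beta> :: "nat \<Rightarrow> nat"
      show "b \<beta> * monom \<beta> z = a \<beta> * monom \<beta> z"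
      proof (cases "(\<forall>j\<ge>n. \<beta> j = 0) \<or> a \<beta> = 0")
        case False
        then obtain j where j: "j \<ge> n" "\<beta> j \<noteq> 0" and "a \<beta> \<noteq> 0" by auto
        then have "fin_multi \<beta>" using assms(1) by (auto simp: Aplus_coeff_def)
        then have "cmod (monom \<beta> z) \<le> cmod (z j)" using monom_le_coord j Rn_le1[OF z] by blast
        then have "monom \<beta> z = 0" using z j by (simp add: Rn_def)
        then show ?thesis by simp
      qed (auto simp: b_def)
    qed
    then show "Aplus_eval b z = 0" using assms(2) Rn_ball[OF z] by simp
  qed
  then have "b \<alpha> = 0" using uniq_n[OF cb sb] by blast
  moreover have "\<forall>j\<ge>n. \<alpha> j = 0" using n by auto
  ultimately show ?thesis by (simp add: b_def)
qed




definition Ef :: "((nat \<Rightarrow> nat) \<Rightarrow> complex) \<Rightarrow> (nat \<Rightarrow> complex) \<Rightarrow> complex" where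
  "Ef a = restrict (Aplus_eval a) c0_ball"

definition unitv :: "nat \<Rightarrow> nat \<Rightarrow> nat" where
  "unitv k = (\<lambda>i. if i = k then 1 else 0)"

lemma ball_le1: "z \<in> c0_ball \<Longrightarrow> \<forall>j. cmod (z j) \<le> 1"
  by (auto simp: c0_ball_def less_imp_le)

lemma restrict_eq_iff: "restrict F A = restrict G A \<longleftrightarrow> (\<forall>z\<in>A. F z = G z)"
  by (metis restrict_apply' restrict_ext)

lemma fin_unitv: "fin_multi (unitv k)"
  by (simp add: fin_multi_def unitv_def)

lemma monom_unitv: "monom (unitv k) z = z k"
proof -
  have "{j. unitv k j \<noteq> 0} = {k}" by (auto simp: unitv_def)
  then show ?thesis by (simp add: monom_def unitv_def)
qed

lemma zero_coeff: "Aplus_coeff (\<lambda>_. 0)"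
  by (simp add: Aplus_coeff_def)

lemma zero_eval: "Aplus_eval (\<lambda>_. 0) z = 0"
  by (simp add: Aplus_eval_def)

lemma eq_coeff:
  assumes "Aplus_coeff a" "Aplus_coeff b" "\<forall>z\<in>c0_ball. Aplus_eval a z = Aplus_eval b z"
  shows "a = b"
proof
  fix \<alpha>
  have cd: "Aplus_coeff (\<lambda>\<beta>. a \<beta> + (-1) * b \<beta>)" by (rule coeff_lin[OF assms(1,2)])
  have "\<forall>z\<in>c0_ball. Aplus_eval (\<lambda>\<beta>. a \<beta> + (-1) * b \<beta>) z = 0"
  proof
    fix z assume z: "z \<in> c0_ball"
    have "Aplus_eval (\<lambda>\<beta>. a \<beta> + (-1) * b \<beta>) z = Aplus_eval a z + (-1) * Aplus_eval b z"
      by (rule eval_lin[OF assms(1,2) ball_le1[OF z]])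
    then show "Aplus_eval (\<lambda>\<beta>. a \<beta> + (-1) * b \<beta>) z = 0" using assms(3) z by simp
  qed
  from uniq[OF cd this] show "a \<alpha> = b \<alpha>" by simp
qed

lemma norm_Ef:
  assumes "Aplus_coeff a"
  shows "Aplus_norm (Ef a) = infsum (\<lambda>\<alpha>. cmod (a \<alpha>)) UNIV"
  unfolding Aplus_norm_def
proof (rule the_equality)
  show "\<exists>a'. Aplus_coeff a' \<and> Ef a = restrict (Aplus_eval a') c0_ball \<and>
          infsum (\<lambda>\<alpha>. cmod (a \<alpha>)) UNIV = infsum (\<lambda>\<alpha>. cmod (a' \<alpha>)) UNIV"
    using assms by (auto simp: Ef_def)
  fix s assume "\<exists>a'. Aplus_coeff a' \<and> Ef a = restrict (Aplus_eval a') c0_ball \<and>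
          s = infsum (\<lambda>\<alpha>. cmod (a' \<alpha>)) UNIV"
  then obtain a' where a': "Aplus_coeff a'" "Ef a = restrict (Aplus_eval a') c0_ball"
      "s = infsum (\<lambda>\<alpha>. cmod (a' \<alpha>)) UNIV" by blast
  have "a = a'" using eq_coeff[OF assms a'(1)] a'(2) by (simp add: Ef_def restrict_eq_iff)
  then show "s = infsum (\<lambda>\<alpha>. cmod (a \<alpha>)) UNIV" using a'(3) by simp
qed

lemma Ef_in: "Aplus_coeff a \<Longrightarrow> Ef a \<in> Aplus"
  by (auto simp: Aplus_def Ef_def)

lemma Aplus_E: "f \<in> Aplus \<Longrightarrow> \<exists>a. Aplus_coeff a \<and> f = Ef a"
  by (auto simp: Aplus_def Ef_def)

lemma Ef_eq_iff: "Ef a = Ef b \<longleftrightarrow> (\<forall>z\<in>c0_ball. Aplus_eval a z = Aplus_eval b z)"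
  by (simp add: Ef_def restrict_eq_iff)

lemma sum_coeff:
  assumes "finite F" "\<forall>\<alpha>\<in>F. Aplus_coeff (c \<alpha>)"
  shows "Aplus_coeff (\<lambda>\<beta>. \<Sum>\<alpha>\<in>F. w \<alpha> * c \<alpha> \<beta>)"
  using assms
proof (induction F rule: finite_induct)
  case empty then show ?case by (simp add: zero_coeff)
next
  case (insert x F)
  have "Aplus_coeff (\<lambda>\<beta>. (\<Sum>\<alpha>\<in>F. w \<alpha> * c \<alpha> \<beta>) + w x * c x \<beta>)"
    by (rule coeff_lin) (use insert in auto)
  then show ?case using insert by (simp add: add.commute)
qed

lemma sum_eval:
  assumes "finite F" "\<forall>\<alpha>\<in>F. Aplus_coeff (c \<alpha>)" "\<forall>j. cmod (z j) \<le> 1"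
  shows "Aplus_eval (\<lambda>\<beta>. \<Sum>\<alpha>\<in>F. w \<alpha> * c \<alpha> \<beta>) z = (\<Sum>\<alpha>\<in>F. w \<alpha> * Aplus_eval (c \<alpha>) z)"
  using assms(1,2)
proof (induction F rule: finite_induct)
  case empty then show ?case by (simp add: zero_eval)
next
  case (insert x F)
  have "Aplus_eval (\<lambda>\<beta>. (\<Sum>\<alpha>\<in>F. w \<alpha> * c \<alpha> \<beta>) + w x * c x \<beta>) z
      = Aplus_eval (\<lambda>\<beta>. \<Sum>\<alpha>\<in>F. w \<alpha> * c \<alpha> \<beta>) z + w x * Aplus_eval (c x) z"
    by (rule eval_lin[OF sum_coeff _ assms(3)]) (use insert in auto)
  then show ?case using insert by (simp add: add.commute)
qed

lemma eval_at_zero: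
  assumes "Aplus_coeff a"
  shows "Aplus_eval a (\<lambda>_. 0) = a (\<lambda>_. 0)"
proof -
  have m: "\<And>\<beta>. a \<beta> \<noteq> 0 \<Longrightarrow> \<beta> \<noteq> (\<lambda>_. 0) \<Longrightarrow> monom \<beta> (\<lambda>_. 0) = 0"
  proof -
    fix \<beta> :: "nat \<Rightarrow> nat" assume "a \<beta> \<noteq> 0" "\<beta> \<noteq> (\<lambda>_. 0)"
    then obtain m where m: "\<beta> m \<noteq> 0" and f: "fin_multi \<beta>" using assms by (auto simp: Aplus_coeff_def)
    have "cmod (monom \<beta> (\<lambda>_. 0)) \<le> cmod ((\<lambda>_. 0::complex) m)"
      by (rule monom_le_coord[OF f m]) simp
    then show "monom \<beta> (\<lambda>_. 0) = 0" by simp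
  qed
  have "Aplus_eval a (\<lambda>_. 0) = infsum (\<lambda>\<beta>. a \<beta> * monom \<beta> (\<lambda>_. 0)) {\<lambda>_. 0}"
    unfolding Aplus_eval_def by (rule infsum_cong_neutral) (use m in auto)
  then show ?thesis by (simp add: monom_zero_multi)
qed




locale setting =
  fixes \<phi> :: "(nat \<Rightarrow> complex) \<Rightarrow> (nat \<Rightarrow> complex)"
  assumes maps_ball: "\<forall>z\<in>c0_ball. \<phi> z \<in> c0_ball"
    and bij: "bij_betw (comp_op \<phi>) Aplus Aplus"
    and isom: "\<forall>f\<in>Aplus. Aplus_norm (comp_op \<phi> f) = Aplus_norm f"
begin

lemma T_Ef: "comp_op \<phi> (Ef a) = restrict (\<lambda>z. Aplus_eval a (\<phi> z)) c0_ball"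
  unfolding comp_op_def Ef_def using maps_ball by (intro restrict_ext) auto

lemma T_Ef_eq: "comp_op \<phi> (Ef a) = Ef b \<longleftrightarrow> (\<forall>z\<in>c0_ball. Aplus_eval a (\<phi> z) = Aplus_eval b z)"
  by (subst T_Ef) (simp add: Ef_def restrict_eq_iff)

lemma surjT: "f \<in> Aplus \<Longrightarrow> \<exists>a. Aplus_coeff a \<and> comp_op \<phi> (Ef a) = f"
proof -
  assume f: "f \<in> Aplus"
  then obtain g where g: "g \<in> Aplus" "comp_op \<phi> g = f" using bij by (metis bij_betw_def imageE)
  then obtain a where "Aplus_coeff a" "g = Ef a" using Aplus_E by blast
  then show ?thesis using g by blast
qed

lemma intoT: "Aplus_coeff a \<Longrightarrow> \<exists>b. Aplus_coeff b \<and> comp_op \<phi> (Ef a) = Ef b"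
proof -
  assume a: "Aplus_coeff a"
  have "comp_op \<phi> (Ef a) \<in> Aplus" using bij Ef_in[OF a] by (auto simp: bij_betw_def)
  then show ?thesis using Aplus_E by blast
qed

lemma injT: "Aplus_coeff a \<Longrightarrow> Aplus_coeff b \<Longrightarrow> comp_op \<phi> (Ef a) = comp_op \<phi> (Ef b) \<Longrightarrow> Ef a = Ef b"
  using bij Ef_in unfolding bij_betw_def inj_on_def by blast

lemma normT:
  assumes "Aplus_coeff a" "Aplus_coeff b" "comp_op \<phi> (Ef a) = Ef b"
  shows "infsum (\<lambda>\<alpha>. cmod (a \<alpha>)) UNIV = infsum (\<lambda>\<alpha>. cmod (b \<alpha>)) UNIV"
  using isom Ef_in[OF assms(1)] assms norm_Ef by metis

lemma step1: "\<exists>\<epsilon> \<beta>. cmod \<epsilon> = 1 \<and> fin_multi \<beta> \<and> (\<forall>z\<in>c0_ball. \<phi> z j = \<epsilon> * monom \<beta> z)"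
proof -
  let ?u = "unitv j"
  have cu: "Aplus_coeff (delta ?u 1)" by (rule delta_coeff[OF fin_unitv])
  obtain b where cb: "Aplus_coeff b" and Tb: "comp_op \<phi> (Ef (delta ?u 1)) = Ef b"
    using intoT[OF cu] by blast
  have hb: "\<forall>z\<in>c0_ball. Aplus_eval b z = \<phi> z j"
    using Tb by (simp add: T_Ef_eq delta_eval monom_unitv)
  have nb: "infsum (\<lambda>\<alpha>. cmod (b \<alpha>)) UNIV = 1"
    using normT[OF cu cb Tb] delta_sum by simp
  obtain \<alpha>0 where b0: "b \<alpha>0 \<noteq> 0"
  proof (cases "\<exists>\<alpha>. b \<alpha> \<noteq> 0")
    case False
    then have "infsum (\<lambda>\<alpha>. cmod (b \<alpha>)) UNIV = 0" by simp
    then show ?thesis using nb by simp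
  qed blast
  have f0: "fin_multi \<alpha>0" using cb b0 by (auto simp: Aplus_coeff_def)
  define cf where "cf \<alpha> = (if fin_multi \<alpha> then (SOME c. Aplus_coeff c \<and> comp_op \<phi> (Ef c) = Ef (delta \<alpha> 1)) else (\<lambda>_. 0))" for \<alpha>
  have cfP: "Aplus_coeff (cf \<alpha>) \<and> (fin_multi \<alpha> \<longrightarrow> (\<forall>z\<in>c0_ball. Aplus_eval (cf \<alpha>) (\<phi> z) = monom \<alpha> z)
       \<and> infsum (\<lambda>\<beta>. cmod (cf \<alpha> \<beta>)) UNIV = 1)" for \<alpha>
  proof (cases "fin_multi \<alpha>")
    case True
    have cd: "Aplus_coeff (delta \<alpha> 1)" by (rule delta_coeff[OF True])
    have "\<exists>c. Aplus_coeff c \<and> comp_op \<phi> (Ef c) = Ef (delta \<alpha> 1)"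
      using surjT[OF Ef_in[OF cd]] .
    from someI_ex[OF this] have P: "Aplus_coeff (cf \<alpha>)" "comp_op \<phi> (Ef (cf \<alpha>)) = Ef (delta \<alpha> 1)"
      using True by (simp_all add: cf_def)
    have "\<forall>z\<in>c0_ball. Aplus_eval (cf \<alpha>) (\<phi> z) = monom \<alpha> z"
      using P(2) by (simp add: T_Ef_eq delta_eval)
    moreover have "infsum (\<lambda>\<beta>. cmod (cf \<alpha> \<beta>)) UNIV = 1"
      using normT[OF P(1) cd P(2)] delta_sum by simp
    ultimately show ?thesis using P(1) by simp
  qed (simp add: cf_def zero_coeff)
  have cf_le1: "cmod (cf \<alpha> \<beta>) \<le> 1" if "fin_multi \<alpha>" for \<alpha> \<beta>
  proof -
    have "(\<Sum>x\<in>{\<beta>}. cmod (cf \<alpha> x)) \<le> infsum (\<lambda>x. cmod (cf \<alpha> x)) UNIV"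
      by (rule finite_sum_le_infsum) (use Aplus_cmod_summable cfP in auto)
    then show ?thesis using cfP that by simp
  qed
  define c where "c = cf \<alpha>0"
  have cu1: "cmod (c ?u) = 1"
  proof (rule ccontr)
    assume "cmod (c ?u) \<noteq> 1"
    then have lt: "cmod (c ?u) < 1" using cf_le1[OF f0, of ?u] c_def by force
    define \<delta> where "\<delta> = cmod (b \<alpha>0) * (1 - cmod (c ?u))"
    have \<delta>pos: "\<delta> > 0" using lt b0 by (simp add: \<delta>_def)
    obtain F0 where F0: "finite F0" "dist (\<Sum>\<alpha>\<in>F0. cmod (b \<alpha>)) (infsum (\<lambda>\<alpha>. cmod (b \<alpha>)) UNIV) \<le> \<delta>/3"
      using infsum_finite_approximation[OF Aplus_cmod_summable[OF cb], of "\<delta>/3"] \<delta>pos by auto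
    define F where "F = insert \<alpha>0 {\<alpha>\<in>F0. fin_multi \<alpha>}"
    have finF: "finite F" using F0(1) by (simp add: F_def)
    have Ffin: "\<forall>\<alpha>\<in>F. fin_multi \<alpha>" using f0 by (simp add: F_def)
    have a0F: "\<alpha>0 \<in> F" by (simp add: F_def)
    have sF0: "(\<Sum>\<alpha>\<in>F0. cmod (b \<alpha>)) \<ge> 1 - \<delta>/3" using F0(2) nb unfolding dist_real_def by (smt (verit))
    have "(\<Sum>\<alpha>\<in>F0. cmod (b \<alpha>)) = (\<Sum>\<alpha>\<in>{\<alpha>\<in>F0. fin_multi \<alpha>}. cmod (b \<alpha>))"
      by (rule sum.mono_neutral_right) (use F0 cb in \<open>auto simp: Aplus_coeff_def\<close>)
    also have "\<dots> \<le> (\<Sum>\<alpha>\<in>F. cmod (b \<alpha>))"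
      by (rule sum_mono2) (use finF in \<open>auto simp: F_def\<close>)
    finally have sF: "(\<Sum>\<alpha>\<in>F. cmod (b \<alpha>)) \<ge> 1 - \<delta>/3" using sF0 by simp
    have sF1: "(\<Sum>\<alpha>\<in>F. cmod (b \<alpha>)) \<le> 1"
      using finite_sum_le_infsum[OF Aplus_cmod_summable[OF cb] finF] nb by simp
    define d where "d = (\<lambda>\<beta>. delta ?u 1 \<beta> + (-1) * (\<Sum>\<alpha>\<in>F. b \<alpha> * cf \<alpha> \<beta>))"
    define b' where "b' = (\<lambda>\<beta>. b \<beta> + (-1) * (\<Sum>\<alpha>\<in>F. b \<alpha> * delta \<alpha> 1 \<beta>))"
    have cS: "Aplus_coeff (\<lambda>\<beta>. \<Sum>\<alpha>\<in>F. b \<alpha> * cf \<alpha> \<beta>)"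
      by (rule sum_coeff) (use finF cfP in auto)
    have cd: "Aplus_coeff d" unfolding d_def by (rule coeff_lin[OF cu cS])
    have cS': "Aplus_coeff (\<lambda>\<beta>. \<Sum>\<alpha>\<in>F. b \<alpha> * delta \<alpha> 1 \<beta>)"
      by (rule sum_coeff) (use finF Ffin delta_coeff in auto)
    have cb': "Aplus_coeff b'" unfolding b'_def by (rule coeff_lin[OF cb cS'])
    have Td: "comp_op \<phi> (Ef d) = Ef b'"
      unfolding T_Ef_eq
    proof
      fix z assume z: "z \<in> c0_ball"
      have pz: "\<phi> z \<in> c0_ball" using maps_ball z by blast
      have "Aplus_eval d (\<phi> z) = Aplus_eval (delta ?u 1) (\<phi> z) + (-1) * Aplus_eval (\<lambda>\<beta>. \<Sum>\<alpha>\<in>F. b \<alpha> * cf \<alpha> \<beta>) (\<phi> z)"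
        unfolding d_def by (rule eval_lin[OF cu cS ball_le1[OF pz]])
      also have "Aplus_eval (\<lambda>\<beta>. \<Sum>\<alpha>\<in>F. b \<alpha> * cf \<alpha> \<beta>) (\<phi> z) = (\<Sum>\<alpha>\<in>F. b \<alpha> * Aplus_eval (cf \<alpha>) (\<phi> z))"
        by (rule sum_eval) (use finF cfP ball_le1[OF pz] in auto)
      also have "\<dots> = (\<Sum>\<alpha>\<in>F. b \<alpha> * monom \<alpha> z)" using cfP Ffin z by (intro sum.cong) auto
      finally have e1: "Aplus_eval d (\<phi> z) = \<phi> z j - (\<Sum>\<alpha>\<in>F. b \<alpha> * monom \<alpha> z)"
        by (simp add: delta_eval monom_unitv)
      have "Aplus_eval b' z = Aplus_eval b z + (-1) * Aplus_eval (\<lambda>\<beta>. \<Sum>\<alpha>\<in>F. b \<alpha> * delta \<alpha> 1 \<beta>) z"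
        unfolding b'_def by (rule eval_lin[OF cb cS' ball_le1[OF z]])
      also have "Aplus_eval (\<lambda>\<beta>. \<Sum>\<alpha>\<in>F. b \<alpha> * delta \<alpha> 1 \<beta>) z = (\<Sum>\<alpha>\<in>F. b \<alpha> * Aplus_eval (delta \<alpha> 1) z)"
        by (rule sum_eval) (use finF Ffin delta_coeff ball_le1[OF z] in auto)
      finally have e2: "Aplus_eval b' z = \<phi> z j - (\<Sum>\<alpha>\<in>F. b \<alpha> * monom \<alpha> z)"
        using hb z by (simp add: delta_eval)
      show "Aplus_eval d (\<phi> z) = Aplus_eval b' z" using e1 e2 by simp
    qed
    have nd: "infsum (\<lambda>\<beta>. cmod (d \<beta>)) UNIV = infsum (\<lambda>\<beta>. cmod (b' \<beta>)) UNIV"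
      by (rule normT[OF cd cb' Td])
    have b'pt: "b' \<beta> = (if \<beta> \<in> F then 0 else b \<beta>)" for \<beta>
    proof -
      have "(\<Sum>\<alpha>\<in>F. b \<alpha> * delta \<alpha> 1 \<beta>) = (\<Sum>\<alpha>\<in>F. if \<beta> = \<alpha> then b \<beta> else 0)"
        by (rule sum.cong) (auto simp: delta_def)
      also have "\<dots> = (if \<beta> \<in> F then b \<beta> else 0)" using finF by simp
      finally show ?thesis by (simp add: b'_def)
    qed
    have "infsum (\<lambda>\<beta>. cmod (b \<beta>)) UNIV
        = infsum (\<lambda>\<beta>. cmod (b' \<beta>) + (if \<beta> \<in> F then cmod (b \<beta>) else 0)) UNIV"
      by (rule infsum_cong) (simp add: b'pt)
    also have "\<dots> = infsum (\<lambda>\<beta>. cmod (b' \<beta>)) UNIV + infsum (\<lambda>\<beta>. if \<beta> \<in> F then cmod (b \<beta>) else 0) UNIV"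
      by (rule infsum_add[OF Aplus_cmod_summable[OF cb'] finite_nonzero_values_imp_summable_on])
        (rule finite_subset[OF _ finF], auto)
    also have "infsum (\<lambda>\<beta>. if \<beta> \<in> F then cmod (b \<beta>) else 0) UNIV = infsum (\<lambda>\<beta>. cmod (b \<beta>)) F"
      by (rule infsum_cong_neutral) auto
    also have "\<dots> = (\<Sum>\<alpha>\<in>F. cmod (b \<alpha>))" using finF by simp
    finally have nb': "infsum (\<lambda>\<beta>. cmod (b' \<beta>)) UNIV \<le> \<delta>/3" using nb sF by simp
    have "(\<Sum>x\<in>{?u}. cmod (d x)) \<le> infsum (\<lambda>x. cmod (d x)) UNIV"
      by (rule finite_sum_le_infsum) (use Aplus_cmod_summable[OF cd] in auto)
    then have du: "cmod (d ?u) \<le> \<delta>/3" using nd nb' by simp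
    have "cmod (\<Sum>\<alpha>\<in>F. b \<alpha> * cf \<alpha> ?u) \<le> (\<Sum>\<alpha>\<in>F. cmod (b \<alpha>) * cmod (cf \<alpha> ?u))"
      by (rule order.trans[OF norm_sum]) (simp add: norm_mult)
    also have "\<dots> = cmod (b \<alpha>0) * cmod (c ?u) + (\<Sum>\<alpha>\<in>F - {\<alpha>0}. cmod (b \<alpha>) * cmod (cf \<alpha> ?u))"
      using finF a0F by (simp add: sum.remove c_def)
    also have "\<dots> \<le> cmod (b \<alpha>0) * cmod (c ?u) + (\<Sum>\<alpha>\<in>F - {\<alpha>0}. cmod (b \<alpha>))"
      using Ffin cf_le1 by (intro add_left_mono sum_mono) (simp add: mult_left_le)
    also have "\<dots> = (\<Sum>\<alpha>\<in>F. cmod (b \<alpha>)) - \<delta>"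
      using finF a0F by (simp add: sum.remove \<delta>_def algebra_simps)
    finally have sb: "cmod (\<Sum>\<alpha>\<in>F. b \<alpha> * cf \<alpha> ?u) \<le> 1 - \<delta>" using sF1 by simp
    have "d ?u = 1 - (\<Sum>\<alpha>\<in>F. b \<alpha> * cf \<alpha> ?u)" by (simp add: d_def delta_def)
    then have "cmod (d ?u) \<ge> cmod (1::complex) - cmod (\<Sum>\<alpha>\<in>F. b \<alpha> * cf \<alpha> ?u)"
      using norm_triangle_ineq2 by metis
    then have "cmod (d ?u) \<ge> \<delta>" using sb by simp
    then show False using du \<delta>pos by simp
  qed
  have cf0: "infsum (\<lambda>\<beta>. cmod (c \<beta>)) UNIV = 1" "Aplus_coeff c"
    using cfP[of \<alpha>0] f0 by (auto simp: c_def)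
  have czero: "c \<beta> = 0" if "\<beta> \<noteq> ?u" for \<beta>
  proof -
    have "(\<Sum>x\<in>{?u, \<beta>}. cmod (c x)) \<le> infsum (\<lambda>x. cmod (c x)) UNIV"
      by (rule finite_sum_le_infsum) (use Aplus_cmod_summable[OF cf0(2)] in auto)
    then show ?thesis using that cu1 cf0(1) by simp
  qed
  have hc: "\<forall>z\<in>c0_ball. Aplus_eval c (\<phi> z) = monom \<alpha>0 z" using cfP[of \<alpha>0] f0 by (simp add: c_def)
  have ec: "Aplus_eval c w = c ?u * w j" for w
  proof -
    have "Aplus_eval c w = Aplus_eval (delta ?u (c ?u)) w"
      by (rule eval_cong) (auto simp: delta_def czero)
    then show ?thesis by (simp add: delta_eval monom_unitv)
  qed
  have cnz: "c ?u \<noteq> 0" using cu1 by auto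
  show ?thesis
  proof (intro exI conjI)
    show "cmod (inverse (c ?u)) = 1" using cu1 by (simp add: norm_inverse)
    show "fin_multi \<alpha>0" by (rule f0)
    show "\<forall>z\<in>c0_ball. \<phi> z j = inverse (c ?u) * monom \<alpha>0 z"
      using hc ec cnz by (simp add: field_simps)
  qed
qed

end




context setting begin

lemma sel: "\<exists>\<epsilon> \<beta>. \<forall>j. cmod (\<epsilon> j) = 1 \<and> fin_multi (\<beta> j) \<and> (\<forall>z\<in>c0_ball. \<phi> z j = \<epsilon> j * monom (\<beta> j) z)"
proof -
  have "\<forall>j. \<exists>p. cmod (fst p) = 1 \<and> fin_multi (snd p) \<and> (\<forall>z\<in>c0_ball. \<phi> z j = fst p * monom (snd p) z)"
    using step1 by force
  from choice[OF this] obtain p where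
    "\<forall>j. cmod (fst (p j)) = 1 \<and> fin_multi (snd (p j)) \<and> (\<forall>z\<in>c0_ball. \<phi> z j = fst (p j) * monom (snd (p j)) z)"
    by blast
  then show ?thesis
    by (rule_tac x="\<lambda>j. fst (p j)" in exI, rule_tac x="\<lambda>j. snd (p j)" in exI) simp
qed

lemma main: "\<exists>\<sigma> \<epsilon>. bij \<sigma> \<and> (\<forall>j. cmod (\<epsilon> j) = 1) \<and> (\<forall>z\<in>c0_ball. \<phi> z = (\<lambda>j. \<epsilon> j * z (\<sigma> j)))"
proof -
  obtain \<epsilon> \<beta> where S: "\<And>j. cmod (\<epsilon> j) = 1" "\<And>j. fin_multi (\<beta> j)"
     "\<And>j z. z \<in> c0_ball \<Longrightarrow> \<phi> z j = \<epsilon> j * monom (\<beta> j) z"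
    using sel by metis
  have zb: "(\<lambda>_. 0) \<in> c0_ball" by (simp add: c0_ball_def)
  have bnz: "\<beta> j \<noteq> (\<lambda>_. 0)" for j
  proof
    assume "\<beta> j = (\<lambda>_. 0)"
    then have "\<phi> (\<lambda>_. 0) j = \<epsilon> j" using S(3)[OF zb, of j] by (simp add: monom_zero_multi)
    moreover have "cmod (\<phi> (\<lambda>_. 0) j) < 1" using maps_ball zb by (auto simp: c0_ball_def)
    ultimately show False using S(1)[of j] by simp
  qed
  have phi0: "\<phi> (\<lambda>_. 0) = (\<lambda>_. 0)"
  proof
    fix j
    obtain m where m: "\<beta> j m \<noteq> 0" using bnz[of j] by auto
    have "cmod (monom (\<beta> j) (\<lambda>_. 0)) \<le> cmod ((\<lambda>_. 0::complex) m)"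
      by (rule monom_le_coord[OF S(2) m]) simp
    then show "\<phi> (\<lambda>_. 0) j = 0" using S(3)[OF zb, of j] by simp
  qed
  have hit: "\<exists>i. \<beta> i = unitv k" for k
  proof (rule ccontr)
    assume nh: "\<not> (\<exists>i. \<beta> i = unitv k)"
    obtain a where ca: "Aplus_coeff a" and Ta: "comp_op \<phi> (Ef a) = Ef (delta (unitv k) 1)"
      using surjT[OF Ef_in[OF delta_coeff[OF fin_unitv]]] by blast
    have ha: "\<forall>z\<in>c0_ball. Aplus_eval a (\<phi> z) = z k"
      using Ta by (simp add: T_Ef_eq delta_eval monom_unitv)
    have "Aplus_eval a (\<phi> (\<lambda>_. 0)) = 0" using ha zb by blast
    then have a0: "a (\<lambda>_. 0) = 0" using phi0 eval_at_zero[OF ca] by simp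
    define A where "A = infsum (\<lambda>\<alpha>. cmod (a \<alpha>)) UNIV"
    have A0: "A \<ge> 0" unfolding A_def by (rule infsum_nonneg) simp
    define t :: real where "t = 1 / (A + 2)"
    have t: "0 < t" "t < 1" "t * A < 1" using A0 by (auto simp: t_def field_simps)
    define z where "z = (\<lambda>j. if j = k then complex_of_real t else 0)"
    have zR: "z \<in> Rn (Suc k)" using t by (auto simp: z_def Rn_def)
    have z: "z \<in> c0_ball" by (rule Rn_ball[OF zR])
    have pz: "\<phi> z \<in> c0_ball" using maps_ball z by blast
    have wle: "cmod (\<phi> z i) \<le> t^2" for i
    proof -
      have e: "cmod (\<phi> z i) = cmod (monom (\<beta> i) z)" using S(3)[OF z, of i] S(1)[of i] by (simp add: norm_mult)
      show ?thesis
      proof (cases "\<exists>m. m \<noteq> k \<and> \<beta> i m \<noteq> 0")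
        case True
        then obtain m where m: "m \<noteq> k" "\<beta> i m \<noteq> 0" by blast
        have "cmod (monom (\<beta> i) z) \<le> cmod (z m)"
          by (rule monom_le_coord[OF S(2) m(2) Rn_le1[OF zR]])
        then show ?thesis using e m by (simp add: z_def)
      next
        case False
        then have sup: "{j. \<beta> i j \<noteq> 0} = {k}" using bnz[of i] by (auto; metis)
        have "\<beta> i k \<noteq> 1"
        proof
          assume "\<beta> i k = 1"
          then have "\<beta> i = unitv k" using False unfolding unitv_def by (intro ext) auto
          then show False using nh by blast
        qed
        moreover have "\<beta> i k \<noteq> 0" using sup by auto
        ultimately have ge: "\<beta> i k \<ge> 2" by linarith
        have "monom (\<beta> i) z = z k ^ \<beta> i k" unfolding monom_def sup by simp
        then have "cmod (monom (\<beta> i) z) = t ^ \<beta> i k" using t by (simp add: z_def norm_power)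
        also have "\<dots> \<le> t ^ 2" by (rule power_decreasing) (use ge t in auto)
        finally show ?thesis using e by simp
      qed
    qed
    have "cmod (Aplus_eval a (\<phi> z)) \<le> t^2 * A"
      unfolding A_def
    proof (rule eval_bound[OF ca ball_le1[OF pz]])
      fix \<alpha> assume a: "a \<alpha> \<noteq> 0"
      then have "\<alpha> \<noteq> (\<lambda>_. 0)" using a0 by auto
      then obtain m where m: "\<alpha> m \<noteq> 0" by auto
      have f: "fin_multi \<alpha>" using a ca by (auto simp: Aplus_coeff_def)
      have "cmod (monom \<alpha> (\<phi> z)) \<le> cmod (\<phi> z m)"
        by (rule monom_le_coord[OF f m ball_le1[OF pz]])
      then show "cmod (monom \<alpha> (\<phi> z)) \<le> t^2" using wle[of m] by simp
    qed simp
    moreover have "Aplus_eval a (\<phi> z) = complex_of_real t" using ha z by (simp add: z_def)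
    ultimately have "t \<le> t^2 * A" using t by simp
    then have "t * 1 \<le> t * (t * A)" by (simp add: power2_eq_square algebra_simps)
    then have "1 \<le> t * A" using t by simp
    then show False using t by simp
  qed
  define \<tau> where "\<tau> k = (SOME i. \<beta> i = unitv k)" for k
  have \<beta>\<tau>: "\<beta> (\<tau> k) = unitv k" for k unfolding \<tau>_def by (rule someI_ex[OF hit])
  have inj\<tau>: "inj \<tau>"
  proof (rule injI)
    fix k k' assume "\<tau> k = \<tau> k'"
    then have "unitv k = unitv k'" using \<beta>\<tau> by metis
    then have "unitv k k = unitv k' k" by simp
    then show "k = k'" by (simp add: unitv_def split: if_splits)
  qed
  have phi\<tau>: "\<phi> z (\<tau> k) = \<epsilon> (\<tau> k) * z k" if "z \<in> c0_ball" for z k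
    using S(3)[OF that, of "\<tau> k"] by (simp add: \<beta>\<tau> monom_unitv)
  have surj\<tau>: "i \<in> range \<tau>" for i
  proof (rule ccontr)
    assume ni: "i \<notin> range \<tau>"
    define Sb where "Sb = {k. \<beta> i k \<noteq> 0}"
    have finS: "finite Sb" using S(2)[of i] by (simp add: Sb_def fin_multi_def)
    define \<gamma> where "\<gamma> m = (if m \<in> range \<tau> then \<beta> i (inv \<tau> m) else 0)" for m
    have \<gamma>\<tau>: "\<gamma> (\<tau> k) = \<beta> i k" for k by (simp add: \<gamma>_def inv_f_f[OF inj\<tau>])
    have supp\<gamma>: "{m. \<gamma> m \<noteq> 0} = \<tau> ` Sb"
    proof
      show "{m. \<gamma> m \<noteq> 0} \<subseteq> \<tau> ` Sb"
      proof
        fix m assume "m \<in> {m. \<gamma> m \<noteq> 0}"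
        then have "m \<in> range \<tau>" "\<gamma> m \<noteq> 0" by (auto simp: \<gamma>_def split: if_splits)
        then obtain k where "m = \<tau> k" "\<beta> i k \<noteq> 0" using \<gamma>\<tau> by auto
        then show "m \<in> \<tau> ` Sb" by (auto simp: Sb_def)
      qed
      show "\<tau> ` Sb \<subseteq> {m. \<gamma> m \<noteq> 0}" using \<gamma>\<tau> by (auto simp: Sb_def)
    qed
    have f\<gamma>: "fin_multi \<gamma>" using finS unfolding fin_multi_def supp\<gamma> by simp
    define C where "C = (\<Prod>k\<in>Sb. \<epsilon> (\<tau> k) ^ \<beta> i k)"
    have nC: "cmod C = 1" unfolding C_def by (simp add: prod_norm[symmetric] norm_power S(1))
    then have Cnz: "C \<noteq> 0" by auto
    have mg: "monom \<gamma> (\<phi> z) = C * monom (\<beta> i) z" if z: "z \<in> c0_ball" for z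
    proof -
      have "monom \<gamma> (\<phi> z) = (\<Prod>m\<in>\<tau> ` Sb. \<phi> z m ^ \<gamma> m)" unfolding monom_def supp\<gamma> by simp
      also have "\<dots> = (\<Prod>k\<in>Sb. \<phi> z (\<tau> k) ^ \<gamma> (\<tau> k))"
        by (rule prod.reindex[unfolded o_def]) (rule inj_on_subset[OF inj\<tau> subset_UNIV])
      also have "\<dots> = (\<Prod>k\<in>Sb. \<epsilon> (\<tau> k) ^ \<beta> i k * z k ^ \<beta> i k)"
        using phi\<tau>[OF z] \<gamma>\<tau> by (simp add: power_mult_distrib)
      also have "\<dots> = C * monom (\<beta> i) z"
        by (simp add: prod.distrib C_def monom_def Sb_def)
      finally show ?thesis .
    qed
    define cst where "cst = \<epsilon> i / C"
    have "comp_op \<phi> (Ef (delta \<gamma> cst)) = comp_op \<phi> (Ef (delta (unitv i) 1))"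
      unfolding T_Ef
    proof (rule restrict_ext)
      fix z assume z: "z \<in> c0_ball"
      show "Aplus_eval (delta \<gamma> cst) (\<phi> z) = Aplus_eval (delta (unitv i) 1) (\<phi> z)"
        using mg[OF z] S(3)[OF z, of i] Cnz by (simp add: delta_eval monom_unitv cst_def)
    qed
    then have "Ef (delta \<gamma> cst) = Ef (delta (unitv i) 1)"
      by (rule injT[OF delta_coeff[OF f\<gamma>] delta_coeff[OF fin_unitv]])
    then have E: "\<forall>w\<in>c0_ball. cst * monom \<gamma> w = w i"
      by (simp add: Ef_eq_iff delta_eval monom_unitv)
    define w :: "nat \<Rightarrow> complex" where "w = (\<lambda>j. if j = i then 1/2 else 0)"
    have wR: "w \<in> Rn (Suc i)" by (auto simp: w_def Rn_def)
    have wb: "w \<in> c0_ball" by (rule Rn_ball[OF wR])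
    obtain k where k: "k \<in> Sb" using bnz[of i] by (auto simp: Sb_def)
    have m1: "\<gamma> (\<tau> k) \<noteq> 0" using k \<gamma>\<tau> by (simp add: Sb_def)
    have m2: "\<tau> k \<noteq> i" using ni by auto
    have "cmod (monom \<gamma> w) \<le> cmod (w (\<tau> k))"
      by (rule monom_le_coord[OF f\<gamma> m1 Rn_le1[OF wR]])
    then have "monom \<gamma> w = 0" using m2 by (simp add: w_def)
    moreover have "cst * monom \<gamma> w = w i" using E wb by blast
    ultimately show False by (simp add: w_def)
  qed
  have bij\<tau>: "bij \<tau>" using inj\<tau> surj\<tau> by (auto simp: bij_def)
  define \<sigma> where "\<sigma> = inv \<tau>"
  have bs: "bij \<sigma>" unfolding \<sigma>_def by (rule bij_imp_bij_inv[OF bij\<tau>])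
  have ts: "\<tau> (\<sigma> j) = j" for j unfolding \<sigma>_def by (rule surj_f_inv_f) (use bij\<tau> in \<open>simp add: bij_def\<close>)
  show ?thesis
  proof (intro exI conjI)
    show "bij \<sigma>" by (rule bs)
    show "\<forall>j. cmod (\<epsilon> j) = 1" using S(1) by blast
    show "\<forall>z\<in>c0_ball. \<phi> z = (\<lambda>j. \<epsilon> j * z (\<sigma> j))"
      using phi\<tau> ts by (metis)
  qed
qed

end



theorem theorem21:
  fixes \<phi> :: "(nat \<Rightarrow> complex) \<Rightarrow> (nat \<Rightarrow> complex)"
  assumes maps_ball: "\<forall>z\<in>c0_ball. \<phi> z \<in> c0_ball"
    and holo: "c0_holomorphic_on \<phi> c0_ball"
    and into: "\<forall>f\<in>Aplus. comp_op \<phi> f \<in> Aplus"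
    and bij: "bij_betw (comp_op \<phi>) Aplus Aplus"
    and isom: "\<forall>f\<in>Aplus. Aplus_norm (comp_op \<phi> f) = Aplus_norm f"
  shows "\<exists>\<sigma> :: nat \<Rightarrow> nat. \<exists>\<epsilon> :: nat \<Rightarrow> complex. bij \<sigma> \<and> (\<forall>j. cmod (\<epsilon> j) = 1) \<and>
           (\<forall>z\<in>c0_ball. \<phi> z = (\<lambda>j. \<epsilon> j * z (\<sigma> j)))"
proof -
  interpret setting \<phi> using maps_ball bij isom by unfold_locales
  show ?thesis using main by blast
qed

end
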